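(* Let $n\ge 1$ and let $F$ be a permutation of $\mathbb{F}_{2^n}$ such that $F(x)=\mathrm{Inv}(x)$ for all $x\in\mathbb{F}_{2^n}\setminus P$, for some nonempty subset $P\subseteq\mathbb{F}_{2^n}$ with $0\in P$. If $c\in\mathbb{F}_{2^n}$ and $c\neq1$, then ${}_c\Delta_F\le \#P+2$.
   Context: $\mathrm{Inv}$ is the multiplicative inverse function on $\mathbb{F}_{2^n}$: $\mathrm{Inv}(x)=x^{2^n-2}$, so $\mathrm{Inv}(x)=x^{-1}$ for $x\neq0$ and $\mathrm{Inv}(0)=0$. For $F:\mathbb{F}_{2^n}\to\mathbb{F}_{2^n}$ and $c\in\mathbb{F}_{2^n}$, ${}_cD_aF(x)=F(x+a)+cF(x)$. For $a,b\in\mathbb{F}_{2^n}$, ${}_c\Delta_F(a,b)$ is the number of $x\in\mathbb{F}_{2^n}$ with ${}_cD_aF(x)=b$, and ${}_c\Delta_F=\max\{{}_c\Delta_F(a,b): a,b\in\mathbb{F}_{2^n},\ a\neq 0 \text{ if } c=1\}$. *)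

theory Defs
  imports "HOL-Library.Cardinality"
begin

definition Inv :: "'a::{field,finite} \<Rightarrow> 'a" where
  "Inv x = x ^ (CARD('a) - 2)"

definition cDer :: "'a::field \<Rightarrow> 'a \<Rightarrow> ('a \<Rightarrow> 'a) \<Rightarrow> 'a \<Rightarrow> 'a" where
  "cDer c a F x = F (x + a) + c * F x"

definition cDelta_ab :: "'a::{field,finite} \<Rightarrow> ('a \<Rightarrow> 'a) \<Rightarrow> 'a \<Rightarrow> 'a \<Rightarrow> nat" where
  "cDelta_ab c F a b = card {x. cDer c a F x = b}"

definition cDelta :: "'a::{field,finite} \<Rightarrow> ('a \<Rightarrow> 'a) \<Rightarrow> nat" where
  "cDelta c F = Max {cDelta_ab c F a b | a b. a \<noteq> 0 \<or> c \<noteq> 1}"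

end

theory Submission
  imports Defs "HOL-Number_Theory.Residues" "HOL-Computational_Algebra.Computational_Algebra"
begin

lemma char2:
  assumes "n \<ge> 1" and "CARD('a::{field,finite}) = 2 ^ n"
  shows "(1::'a) + 1 = 0"
proof -
  have pos: "CHAR('a) > 0" by (rule finite_imp_CHAR_pos) simp
  have pr: "prime CHAR('a)" using prime_CHAR_semidom[OF pos] .
  have "CHAR('a) dvd 2 ^ n" using CHAR_dvd_CARD[where 'a='a] assms(2) by simp
  hence "CHAR('a) dvd 2" using pr prime_dvd_power by blast
  hence "CHAR('a) = 2" using pr by (metis prime_nat_iff two_is_prime_nat not_prime_1)
  hence "of_nat 2 = (0::'a)" by (metis of_nat_CHAR)
  thus ?thesis by simp
qed

lemma power_card_field:
  fixes x :: "'a::{field,finite}"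
  assumes "x \<noteq> 0"
  shows "x ^ (CARD('a) - 1) = 1"
proof -
  have "(\<Prod>y\<in>UNIV-{0}. x * y) = x ^ (CARD('a) - 1) * \<Prod>(UNIV-{0::'a})"
    by (simp add: prod.distrib card_Diff_singleton)
  also have "(\<Prod>y\<in>UNIV-{0}. x * y) = (\<Prod>y\<in>UNIV-{0::'a}. y)"
    by (rule prod.reindex_bij_witness[of _ "\<lambda>y. y / x" "\<lambda>y. x * y"]) (use assms in auto)
  finally have "\<Prod>(UNIV-{0::'a}) = x ^ (CARD('a) - 1) * \<Prod>(UNIV-{0::'a})" .
  moreover have "\<Prod>(UNIV-{0::'a}) \<noteq> 0" by simp
  ultimately show ?thesis by simp
qed

lemma Inv_inverse:
  fixes x :: "'a::{field,finite}"
  assumes "x \<noteq> 0"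
  shows "Inv x = inverse x"
proof -
  have c2: "CARD('a) \<ge> 2"
  proof -
    have "{0::'a, 1} \<subseteq> UNIV" by simp
    hence "card {0::'a,1} \<le> CARD('a)" by (intro card_mono) auto
    thus ?thesis by simp
  qed
  have "x * x ^ (CARD('a) - 2) = x ^ (CARD('a) - 1)"
    using c2 by (metis Suc_diff_Suc Suc_1 power_Suc Suc_le_lessD)
  also have "\<dots> = 1" using power_card_field[OF assms] .
  finally show ?thesis unfolding Inv_def using assms by (simp add: field_simps)
qed

lemma quad_roots:
  fixes b ee ff :: "'a::field"
  assumes "b \<noteq> 0 \<or> ee \<noteq> 0"
  shows "card {x. b*x^2 + ee*x + ff = 0} \<le> 2"
proof -
  have "[:ff, ee, b:] \<noteq> 0" using assms by auto
  hence "card {x. poly [:ff, ee, b:] x = 0} \<le> degree [:ff, ee, b:]" by (rule card_poly_roots_bound)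
  also have "\<dots> \<le> 2" by (simp add: degree_pCons_le)
  finally show ?thesis by (simp add: algebra_simps power2_eq_square)
qed


lemma count_bound:
  fixes F :: "'a::{field,finite} \<Rightarrow> 'a" and P :: "'a set" and c :: 'a and n :: nat
  assumes "n \<ge> 1" and "CARD('a) = 2 ^ n"
    and bF: "bij F"
    and "0 \<in> P"
    and FI: "\<And>x. x \<notin> P \<Longrightarrow> F x = Inv x"
    and "c \<noteq> 1"
  shows "cDelta_ab c F a b \<le> card P + 2"
proof -
  have two: "(1::'a) + 1 = 0" using char2 assms(1,2) by blast
  have neg: "\<And>y::'a. - y = y"
  proof -
    fix y :: 'a
    have "y + y = (1+1)*y" by (simp add: algebra_simps)
    thus "- y = y" using two by (simp add: add_eq_0_iff)
  qed
  have injF: "inj F" using bF bij_is_inj by blast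
  have c1: "1 - c \<noteq> 0" using assms(6) by simp
  have cp: "1 + c \<noteq> 0"
  proof -
    have "1 + c = 1 - c" using neg[of c] by (metis diff_conv_add_uminus)
    thus ?thesis using c1 by metis
  qed
  define S where "S = {x. F (x + a) + c * F x = b}"
  have cd: "cDelta_ab c F a b = card S" unfolding cDelta_ab_def cDer_def S_def by simp
  show ?thesis
  proof (cases "a = 0")
    case True
    have "S \<subseteq> {inv_into UNIV F (b / (1 + c))}"
    proof
      fix x assume "x \<in> S"
      hence "(1 + c) * F x = b" unfolding S_def using True by (simp add: algebra_simps)
      moreover have "1 + c \<noteq> 0" by (rule cp)
      ultimately have "F x = b / (1 + c)" by (simp add: field_simps)
      hence "x = inv_into UNIV F (b / (1 + c))" using injF by (metis inv_f_f)
      thus "x \<in> {inv_into UNIV F (b / (1 + c))}" by simp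
    qed
    hence "card S \<le> 1" using card_mono[of "{inv_into UNIV F (b / (1 + c))}" S] by simp
    thus ?thesis using cd by simp
  next
    case False
    define A where "A = {x. x \<in> P \<or> x + a \<in> P}"
    define g where "g x = (if x \<in> P then x else x + a)" for x
    have "inj_on g (S \<inter> A)"
    proof (rule inj_onI)
      fix x y assume x: "x \<in> S \<inter> A" and y: "y \<in> S \<inter> A" and gxy: "g x = g y"
      have key: "x = y" if xP: "x \<in> P" and yP: "y \<notin> P" and xS: "x \<in> S" and yS: "y \<in> S"
        and ee: "x = y + a" for x y
      proof -
        have e2: "y = x + a" using ee neg by (metis add.commute add_diff_cancel_left' diff_conv_add_uminus)
        have "F y + c * F x = b" using xS e2 unfolding S_def by simp
        moreover have "F x + c * F y = b" using yS ee unfolding S_def by simp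
        ultimately have "(1 - c) * (F y - F x) = 0" by (simp add: algebra_simps)
        hence "F y = F x" using c1 by simp
        hence "y = x" using injF by (simp add: inj_eq)
        thus ?thesis by simp
      qed
      show "x = y"
      proof (cases "x \<in> P"; cases "y \<in> P")
        assume "x \<in> P" "y \<in> P" thus ?thesis using gxy g_def by simp
      next
        assume "x \<notin> P" "y \<notin> P" thus ?thesis using gxy g_def by simp
      next
        assume h: "x \<in> P" "y \<notin> P"
        hence "x = y + a" using gxy unfolding g_def by simp
        thus ?thesis using key[of x y] h x y by blast
      next
        assume h: "x \<notin> P" "y \<in> P"
        hence "y = x + a" using gxy unfolding g_def by simp
        thus ?thesis using key[of y x] h x y by (metis IntD1)
      qed
    qed
    moreover have "g ` (S \<inter> A) \<subseteq> P" unfolding g_def A_def by auto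
    ultimately have cA: "card (S \<inter> A) \<le> card P" by (metis card_inj_on_le finite)
    define ee where "ee = b * a - 1 - c"
    define ff where "ff = - c * a"
    have sub: "S - A \<subseteq> {x. b*x^2 + ee*x + ff = 0}"
    proof
      fix x assume xs: "x \<in> S - A"
      hence nx: "x \<notin> P" "x + a \<notin> P" unfolding A_def by auto
      hence x0: "x \<noteq> 0" "x + a \<noteq> 0" using assms(4) by auto
      have "inverse (x + a) + c * inverse x = b"
        using xs nx FI Inv_inverse[OF x0(1)] Inv_inverse[OF x0(2)] unfolding S_def by simp
      hence "x + c * (x + a) = b * x * (x + a)" using x0 by (simp add: field_simps)
      thus "x \<in> {x. b*x^2 + ee*x + ff = 0}" unfolding ee_def ff_def
        by (simp add: algebra_simps power2_eq_square)
    qed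
    have "b \<noteq> 0 \<or> ee \<noteq> 0"
    proof (cases "b = 0")
      case True
      hence "ee = - (1 + c)" unfolding ee_def by simp
      moreover have "1 + c \<noteq> 0" by (rule cp)
      ultimately have "ee \<noteq> 0" by (metis neg_equal_0_iff_equal)
      thus ?thesis by simp
    qed simp
    hence "card {x. b*x^2 + ee*x + ff = 0} \<le> 2" by (rule quad_roots)
    hence c2: "card (S - A) \<le> 2" using sub by (meson card_mono finite le_trans)
    have "card S \<le> card (S \<inter> A) + card (S - A)"
      by (metis Int_Diff_Un card_Un_le)
    thus ?thesis using cA c2 cd by simp
  qed
qed

theorem mainTheorem3:
  fixes F :: "'a::{field,finite} \<Rightarrow> 'a" and P :: "'a set" and c :: 'a and n :: nat
  assumes "n \<ge> 1" and "CARD('a) = 2 ^ n"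
    and "bij F"
    and "P \<noteq> {}" and "0 \<in> P"
    and "\<And>x. x \<notin> P \<Longrightarrow> F x = Inv x"
    and "c \<noteq> 1"
  shows "cDelta c F \<le> card P + 2"
proof -
  let ?M = "{cDelta_ab c F a b | a b. a \<noteq> 0 \<or> c \<noteq> 1}"
  have "?M \<subseteq> (\<lambda>p. cDelta_ab c F (fst p) (snd p)) ` UNIV" by (auto intro!: image_eqI[where x="(a,b)" for a b])
  hence fin: "finite ?M" by (rule finite_subset) simp
  have ne: "?M \<noteq> {}" using assms(7) by auto
  have "\<forall>m\<in>?M. m \<le> card P + 2" using count_bound[OF assms(1,2,3,5,6,7)] by auto
  thus ?thesis unfolding cDelta_def using Max.boundedI[OF fin ne] by blast
qed

end
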